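(* Let $\Gamma:\Delta\to\mathbb{R}_+$ with $\Gamma(s,s)>0$ for all $s\ge0$, and let $\rho$ be a Borel measure on $\mathbb{R}_+$ finite on compact sets. Then $\Gamma$ preserves nonnegativity if and only if $\Gamma^\rho(t,s)=\Gamma(t,s)e^{-\rho((s,t])}$ preserves nonnegativity.
   Context: $\Delta=\{(t,s):0\le s\le t\}$. A kernel $\Gamma:\Delta\to\mathbb{R}_+$ preserves nonnegativity if for every $T>0$, $K\in\mathbb{N}^*$, $x_1,\dots,x_K\in\mathbb{R}$ and $0\le t_1<\dots<t_K<T$ with $\sum_{k'=1}^kx_{k'}\Gamma(t_k,t_{k'})\ge0$ for all $k$, one has $\sum_{k:t_k\le t}x_k\Gamma(t,t_k)\ge0$ for all $t\in[0,T]$. *)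

theory Defs
  imports "HOL-Analysis.Analysis"
begin

text \<open>A kernel on Delta = {(t,s). 0 <= s <= t} is represented as a function
  real => real => real (first argument t, second s); values outside Delta are irrelevant.
  Points t_1 < ... < t_K are indexed by 0..<K.\<close>

definition preserves_nonneg :: "(real \<Rightarrow> real \<Rightarrow> real) \<Rightarrow> bool" where
  "preserves_nonneg \<Gamma> \<longleftrightarrow>
     (\<forall>T>0. \<forall>K::nat. K \<ge> 1 \<longrightarrow> (\<forall>(x::nat \<Rightarrow> real) (tt::nat \<Rightarrow> real).
        (0 \<le> tt 0 \<and> (\<forall>k. Suc k < K \<longrightarrow> tt k < tt (Suc k)) \<and> tt (K - 1) < T \<and>
         (\<forall>k<K. (\<Sum>k'\<in>{..k}. x k' * \<Gamma> (tt k) (tt k')) \<ge> 0))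
        \<longrightarrow> (\<forall>t\<in>{0..T}. (\<Sum>k\<in>{k. k < K \<and> tt k \<le> t}. x k * \<Gamma> t (tt k)) \<ge> 0)))"

definition kernel_rho :: "(real \<Rightarrow> real \<Rightarrow> real) \<Rightarrow> real measure \<Rightarrow> real \<Rightarrow> real \<Rightarrow> real" where
  "kernel_rho \<Gamma> \<rho> t s = \<Gamma> t s * exp (- measure \<rho> {s<..t})"

end

theory Submission
  imports Defs
begin

lemma mono_tt:
  assumes "\<forall>k. Suc k < K \<longrightarrow> (tt::nat\<Rightarrow>real) k < tt (Suc k)" "i \<le> j" "j < K"
  shows "tt i \<le> tt j"
  using assms(2,3)
proof (induction j)
  case 0 then show ?case by simp
next
  case (Suc j)
  show ?case
  proof (cases "i = Suc j")
    case False
    then have "i \<le> j" using Suc.prems by simp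
    then have "tt i \<le> tt j" using Suc by simp
    also have "tt j < tt (Suc j)" using assms(1) Suc.prems by blast
    finally show ?thesis by simp
  qed simp
qed

lemma transfer_pn:
  fixes G \<Gamma> :: "real \<Rightarrow> real \<Rightarrow> real" and a b :: "real \<Rightarrow> real"
  assumes eq: "\<And>t s. 0 \<le> s \<Longrightarrow> s \<le> t \<Longrightarrow> G t s = a t * \<Gamma> t s * b s"
    and apos: "\<And>t. a t > 0" and bpos: "\<And>s. b s > 0"
    and pn: "preserves_nonneg \<Gamma>"
  shows "preserves_nonneg G"
  unfolding preserves_nonneg_def
proof (intro allI impI ballI)
  fix T :: real and K :: nat and x tt :: "nat \<Rightarrow> real" and t :: real
  assume T: "T > 0" and K: "K \<ge> 1"
    and H: "0 \<le> tt 0 \<and> (\<forall>k. Suc k < K \<longrightarrow> tt k < tt (Suc k)) \<and> tt (K - 1) < T \<and>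
         (\<forall>k<K. (\<Sum>k'\<in>{..k}. x k' * G (tt k) (tt k')) \<ge> 0)"
    and t: "t \<in> {0..T}"
  have inc: "\<forall>k. Suc k < K \<longrightarrow> tt k < tt (Suc k)" using H by blast
  have ttnn: "tt k \<ge> 0" if "k < K" for k
    using mono_tt[OF inc, of 0 k] that H by simp
  define y where "y k = x k * b (tt k)" for k
  have hy: "(\<Sum>k'\<in>{..k}. y k' * \<Gamma> (tt k) (tt k')) \<ge> 0" if k: "k < K" for k
  proof -
    have "(\<Sum>k'\<in>{..k}. x k' * G (tt k) (tt k')) = a (tt k) * (\<Sum>k'\<in>{..k}. y k' * \<Gamma> (tt k) (tt k'))"
      unfolding sum_distrib_left
    proof (rule sum.cong)
      fix k' assume "k' \<in> {..k}"
      then have "k' \<le> k" by simp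
      then have "0 \<le> tt k'" "tt k' \<le> tt k" using ttnn mono_tt[OF inc, of k' k] k by auto
      then show "x k' * G (tt k) (tt k') = a (tt k) * (y k' * \<Gamma> (tt k) (tt k'))"
        using eq y_def by simp
    qed simp
    moreover have "(\<Sum>k'\<in>{..k}. x k' * G (tt k) (tt k')) \<ge> 0" using H k by blast
    ultimately show ?thesis using apos[of "tt k"] by (simp add: zero_le_mult_iff)
  qed
  have "\<forall>t\<in>{0..T}. (\<Sum>k\<in>{k. k < K \<and> tt k \<le> t}. y k * \<Gamma> t (tt k)) \<ge> 0"
    using pn T K H hy unfolding preserves_nonneg_def by blast
  then have S: "(\<Sum>k\<in>{k. k < K \<and> tt k \<le> t}. y k * \<Gamma> t (tt k)) \<ge> 0" using t by blast
  have "(\<Sum>k\<in>{k. k < K \<and> tt k \<le> t}. x k * G t (tt k)) = a t * (\<Sum>k\<in>{k. k < K \<and> tt k \<le> t}. y k * \<Gamma> t (tt k))"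
    unfolding sum_distrib_left
  proof (rule sum.cong)
    fix k assume "k \<in> {k. k < K \<and> tt k \<le> t}"
    then have "0 \<le> tt k" "tt k \<le> t" using ttnn by auto
    then show "x k * G t (tt k) = a t * (y k * \<Gamma> t (tt k))" using eq y_def by simp
  qed simp
  then show "(\<Sum>k\<in>{k. k < K \<and> tt k \<le> t}. x k * G t (tt k)) \<ge> 0"
    using S apos[of t] by simp
qed

theorem mainTheorem17:
  fixes \<Gamma> :: "real \<Rightarrow> real \<Rightarrow> real" and \<rho> :: "real measure"
  assumes nonneg: "\<And>t s. 0 \<le> s \<Longrightarrow> s \<le> t \<Longrightarrow> \<Gamma> t s \<ge> 0"
    and diag: "\<And>s. 0 \<le> s \<Longrightarrow> \<Gamma> s s > 0"
    and borel: "sets \<rho> = sets (borel :: real measure)"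
    and loc_fin: "\<And>K. compact K \<Longrightarrow> K \<subseteq> {0..} \<Longrightarrow> emeasure \<rho> K < \<infinity>"
  shows "preserves_nonneg \<Gamma> \<longleftrightarrow> preserves_nonneg (kernel_rho \<Gamma> \<rho>)"
proof -
  define F where "F u = measure \<rho> {0..u}" for u
  have meas: "measure \<rho> {s<..t} = F t - F s" if "0 \<le> s" "s \<le> t" for s t
  proof -
    have fin: "emeasure \<rho> {0..t} \<noteq> \<infinity>" using loc_fin[of "{0..t}"] by auto
    have "{0..t} - {0..s} = {s<..t}" using that by auto
    moreover have "measure \<rho> ({0..t} - {0..s}) = measure \<rho> {0..t} - measure \<rho> {0..s}"
      by (rule measure_Diff[OF fin]) (use borel that in auto)
    ultimately show ?thesis unfolding F_def by simp
  qed
  have eq1: "kernel_rho \<Gamma> \<rho> t s = (\<lambda>t. exp (- F t)) t * \<Gamma> t s * (\<lambda>s. exp (F s)) s"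
    if "0 \<le> s" "s \<le> t" for s t
  proof -
    have "exp (- measure \<rho> {s<..t}) = exp (- F t) * exp (F s)"
      using meas[OF that] by (simp add: exp_add[symmetric])
    then show ?thesis unfolding kernel_rho_def by simp
  qed
  have eq2: "\<Gamma> t s = (\<lambda>t. exp (F t)) t * kernel_rho \<Gamma> \<rho> t s * (\<lambda>s. exp (- F s)) s"
    if "0 \<le> s" "s \<le> t" for s t
    using eq1[OF that] by (simp add: exp_minus field_simps)
  show ?thesis
  proof
    assume "preserves_nonneg \<Gamma>"
    then show "preserves_nonneg (kernel_rho \<Gamma> \<rho>)"
      using transfer_pn[where G="kernel_rho \<Gamma> \<rho>" and \<Gamma>=\<Gamma> and a="\<lambda>t. exp (- F t)" and b="\<lambda>s. exp (F s)"] eq1 by auto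
  next
    assume "preserves_nonneg (kernel_rho \<Gamma> \<rho>)"
    then show "preserves_nonneg \<Gamma>"
      using transfer_pn[where G=\<Gamma> and \<Gamma>="kernel_rho \<Gamma> \<rho>" and a="\<lambda>t. exp (F t)" and b="\<lambda>s. exp (- F s)"] eq2 by auto
  qed
qed

end
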